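(* Let $\mathcal G=(N,\Sigma,S,P)$ be a normalized spine grammar with spine direction $d$. Then $\pi(\mathcal F(\mathcal S(\mathcal G))_S)=T(\mathcal G)$, where $\pi$ is the relabeling with $\pi(\alpha_n)=\alpha$ and $\pi\bigl(\tfrac{\sigma}{n_1\ n_2}\bigr)=\sigma$ for all $\alpha\in\Sigma_0$, $\sigma\in\Sigma_2$, $n,n_1,n_2\in N$.
   Context: sCFTG/spine grammar: $\mathcal G=(N,\Sigma,S,P)$, $N=N_0\cup N_1$ (nullary/unary nonterminals), terminals $\Sigma=\Sigma_0\cup\Sigma_2$, $S\in N_0$; productions rewrite nullary nonterminals to trees and unary nonterminals to contexts (trees with one hole $\Box$); $T(\mathcal G)$ is the set of terminal trees derivable from $S$. Spine direction $d:\Sigma_2\to\{1,2\}$: in every production for a unary nonterminal, the path from the root to $\Box$ passes from each $\sigma\in\Sigma_2$ on it into child $d(\sigma)$. Normalized: every production is of the form $n\to\alpha$ or $n\to b(\alpha)$ ($n\in N_0$, $b\in N_1$, $\alpha\in\Sigma_0$), $n\to b_1(b_2(\Box))$ ($b_1,b_2\in N_1$), or $n\to\sigma(\Box,a)$ / $n\to\sigma(a,\Box)$ ($\sigma\in\Sigma_2$, $a\in N_0\setminus\{S\}$); and for each $n\in N_0$ no tree derivable from $n$ by one step followed by steps using only productions for unary nonterminals contains $n$. Notation: $n_g=(n,g)\in N^2$, $\alpha_n=(\alpha,n)\in\Sigma_0\times N$, $\frac{\sigma}{n_1\ n_2}=(\sigma,n_1,n_2)\in\Sigma_2\times N^2$.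 Spines: $\mathcal S(\mathcal G)=L(\mathcal G')$ for the CFG $\mathcal G'$ with nonterminals $\{\top\}\cup N^2$ ($\top\notin N$), start $\top$, terminals $(\Sigma_0\times N)\cup(\Sigma_2\times N^2)$ and productions: $\top\to\alpha_n$ for each $(n\to\alpha)\in P$; $\top\to\alpha_n\,b_n$ for each $(n\to b(\alpha))\in P$; for all $g\in N$: $n_g\to b'_g\,b_g$ for each $(n\to b(b'(\Box)))\in P$; $n_g\to\frac{\sigma}{g\ n'}$ for each $(n\to\sigma(\Box,n'))\in P$; $n_g\to\frac{\sigma}{n'\ g}$ for each $(n\to\sigma(n',\Box))\in P$. Reassembly: let $\mathrm{gen}(\alpha_n)=n$ and $\mathrm{gen}(\frac{\sigma}{n_1\ n_2})=n_{d(\sigma)}$. For a set $T$ of trees with binary symbols in $\Sigma_2\times N^2$ and leaves in $\Sigma_0\times N$, let $T_n=\{t\in T\mid\mathrm{gen}(\text{root label of }t)=n\}$. For $w\in(\Sigma_0\times N)(\Sigma_2\times N^2)^*$ define $\mathrm{attach}_T(\alpha_n)=\{\alpha_n\}$ and $\mathrm{attach}_T(w\frac{\sigma}{n_1\ n_2})=\{\frac{\sigma}{n_1\ n_2}(t_1,t_2)\mid t_{d(\sigma)}\in\mathrm{attach}_T(w),\ t_{3-d(\sigma)}\in T_{n_{3-d(\sigma)}}\}$. For a language $L\subseteq(\Sigma_0\times N)(\Sigma_2\times N^2)^*$, $\mathcal F(L)$ is the smallest tree language $\mathcal F$ with $\mathrm{attach}_{\mathcal F}(w)\subseteq\mathcal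 F$ for all $w\in L$, and $\mathcal F(L)_S=\{t\in\mathcal F(L)\mid\mathrm{gen}(\text{root label of }t)=S\}$. *)

theory Defs
  imports Main
begin

text \<open>Right-hand sides / sentential forms: trees over terminals, nonterminals and the hole.\<close>
datatype ('n,'t) rtree = Hole | Term 't "('n,'t) rtree list" | NT 'n "('n,'t) rtree list"

datatype ('a,'b) btree = Lf 'a | Br 'b "('a,'b) btree" "('a,'b) btree"

record ('n,'t) scftg =
  N0 :: "'n set"
  N1 :: "'n set"
  Sig0 :: "'t set"
  Sig2 :: "'t set"
  start :: 'n
  prods :: "('n \<times> ('n,'t) rtree) set"

definition NN :: "('n,'t) scftg \<Rightarrow> 'n set" where
  "NN G = N0 G \<union> N1 G"

fun holes :: "('n,'t) rtree \<Rightarrow> nat" where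
  "holes Hole = 1"
| "holes (Term f ts) = sum_list (map holes ts)"
| "holes (NT m ts) = sum_list (map holes ts)"

fun nts :: "('n,'t) rtree \<Rightarrow> 'n set" where
  "nts Hole = {}"
| "nts (Term f ts) = \<Union> (set (map nts ts))"
| "nts (NT m ts) = insert m (\<Union> (set (map nts ts)))"

fun wellranked :: "('n,'t) scftg \<Rightarrow> ('n,'t) rtree \<Rightarrow> bool" where
  "wellranked G Hole = True"
| "wellranked G (Term f ts) =
     (((f \<in> Sig0 G \<and> ts = []) \<or> (f \<in> Sig2 G \<and> length ts = 2)) \<and> (\<forall>t \<in> set ts. wellranked G t))"
| "wellranked G (NT m ts) =
     (((m \<in> N0 G \<and> ts = []) \<or> (m \<in> N1 G \<and> length ts = 1)) \<and> (\<forall>t \<in> set ts. wellranked G t))"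

definition wf_scftg :: "('n,'t) scftg \<Rightarrow> bool" where
  "wf_scftg G \<longleftrightarrow>
     finite (N0 G) \<and> finite (N1 G) \<and> finite (Sig0 G) \<and> finite (Sig2 G) \<and> finite (prods G) \<and>
     N0 G \<inter> N1 G = {} \<and> Sig0 G \<inter> Sig2 G = {} \<and> start G \<in> N0 G \<and>
     (\<forall>(n, r) \<in> prods G. n \<in> NN G \<and> wellranked G r \<and>
        (n \<in> N0 G \<longrightarrow> holes r = 0) \<and> (n \<in> N1 G \<longrightarrow> holes r = 1))"

fun subst_hole :: "('n,'t) rtree \<Rightarrow> ('n,'t) rtree \<Rightarrow> ('n,'t) rtree" where
  "subst_hole Hole u = u"
| "subst_hole (Term f ts) u = Term f (map (\<lambda>t. subst_hole t u) ts)"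
| "subst_hole (NT m ts) u = NT m (map (\<lambda>t. subst_hole t u) ts)"

inductive dstep :: "('n,'t) scftg \<Rightarrow> ('n \<times> ('n,'t) rtree) set \<Rightarrow> ('n,'t) rtree \<Rightarrow> ('n,'t) rtree \<Rightarrow> bool"
  for G Ps where
  apply0: "(n, r) \<in> Ps \<Longrightarrow> n \<in> N0 G \<Longrightarrow> dstep G Ps (NT n []) r"
| apply1: "(n, r) \<in> Ps \<Longrightarrow> n \<in> N1 G \<Longrightarrow> dstep G Ps (NT n [u]) (subst_hole r u)"
| congT: "dstep G Ps t t' \<Longrightarrow> dstep G Ps (Term f (xs @ t # ys)) (Term f (xs @ t' # ys))"
| congN: "dstep G Ps t t' \<Longrightarrow> dstep G Ps (NT m (xs @ t # ys)) (NT m (xs @ t' # ys))"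

fun embed :: "('t,'t) btree \<Rightarrow> ('n,'t) rtree" where
  "embed (Lf a) = Term a []"
| "embed (Br s l r) = Term s [embed l, embed r]"

definition tree_lang :: "('n,'t) scftg \<Rightarrow> ('t,'t) btree set" where
  "tree_lang G = {t. (dstep G (prods G))\<^sup>*\<^sup>* (NT (start G) []) (embed t)}"

fun spine_ok :: "('t \<Rightarrow> nat) \<Rightarrow> ('n,'t) rtree \<Rightarrow> bool" where
  "spine_ok d Hole = True"
| "spine_ok d (Term f [t1, t2]) =
     ((d f = 1 \<and> holes t1 > 0 \<and> spine_ok d t1) \<or> (d f = 2 \<and> holes t2 > 0 \<and> spine_ok d t2))"
| "spine_ok d (Term f _) = False"
| "spine_ok d (NT m [t]) = spine_ok d t"
| "spine_ok d (NT m _) = False"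

definition spine_direction :: "('n,'t) scftg \<Rightarrow> ('t \<Rightarrow> nat) \<Rightarrow> bool" where
  "spine_direction G d \<longleftrightarrow>
     (\<forall>\<sigma> \<in> Sig2 G. d \<sigma> \<in> {1, 2}) \<and>
     (\<forall>(n, r) \<in> prods G. n \<in> N1 G \<longrightarrow> spine_ok d r)"

definition normalized :: "('n,'t) scftg \<Rightarrow> bool" where
  "normalized G \<longleftrightarrow>
     (\<forall>(n, r) \<in> prods G.
        (n \<in> N0 G \<and> (\<exists>\<alpha> \<in> Sig0 G. r = Term \<alpha> [])) \<or>
        (n \<in> N0 G \<and> (\<exists>b \<in> N1 G. \<exists>\<alpha> \<in> Sig0 G. r = NT b [Term \<alpha> []])) \<or>
        (n \<in> N1 G \<and> (\<exists>b1 \<in> N1 G. \<exists>b2 \<in> N1 G. r = NT b1 [NT b2 [Hole]])) \<or>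
        (n \<in> N1 G \<and> (\<exists>\<sigma> \<in> Sig2 G. \<exists>a \<in> N0 G - {start G}. r = Term \<sigma> [Hole, NT a []])) \<or>
        (n \<in> N1 G \<and> (\<exists>\<sigma> \<in> Sig2 G. \<exists>a \<in> N0 G - {start G}. r = Term \<sigma> [NT a [], Hole]))) \<and>
     (\<forall>n \<in> N0 G. \<forall>t t'. dstep G (prods G) (NT n []) t \<longrightarrow>
        (dstep G {p \<in> prods G. fst p \<in> N1 G})\<^sup>*\<^sup>* t t' \<longrightarrow> n \<notin> nts t')"

text \<open>Letters \<open>\<alpha>_n\<close> (\<open>SLeaf \<alpha> n\<close>) and \<open>\<sigma>/(n1 n2)\<close> (\<open>SBin \<sigma> n1 n2\<close>).\<close>
datatype ('n,'t) ssym = SLeaf 't 'n | SBin 't 'n 'n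

text \<open>Nonterminals of G': \<open>\<top>\<close> and pairs \<open>n_g\<close>.\<close>
datatype 'n cnt = Top | NP 'n 'n

type_synonym ('n,'t) cprod = "'n cnt \<times> ('n cnt + ('n,'t) ssym) list"

inductive_set spine_prods :: "('n,'t) scftg \<Rightarrow> ('n,'t) cprod set" for G where
  "(n, Term \<alpha> []) \<in> prods G \<Longrightarrow> (Top, [Inr (SLeaf \<alpha> n)]) \<in> spine_prods G"
| "(n, NT b [Term \<alpha> []]) \<in> prods G \<Longrightarrow> (Top, [Inr (SLeaf \<alpha> n), Inl (NP b n)]) \<in> spine_prods G"
| "(n, NT b [NT b' [Hole]]) \<in> prods G \<Longrightarrow> g \<in> NN G \<Longrightarrow>
     (NP n g, [Inl (NP b' g), Inl (NP b g)]) \<in> spine_prods G"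
| "(n, Term \<sigma> [Hole, NT n' []]) \<in> prods G \<Longrightarrow> g \<in> NN G \<Longrightarrow>
     (NP n g, [Inr (SBin \<sigma> g n')]) \<in> spine_prods G"
| "(n, Term \<sigma> [NT n' [], Hole]) \<in> prods G \<Longrightarrow> g \<in> NN G \<Longrightarrow>
     (NP n g, [Inr (SBin \<sigma> n' g)]) \<in> spine_prods G"

definition cfg_step :: "('a \<times> ('a + 'b) list) set \<Rightarrow> ('a + 'b) list \<Rightarrow> ('a + 'b) list \<Rightarrow> bool" where
  "cfg_step R u v \<longleftrightarrow> (\<exists>x y A \<alpha>. (A, \<alpha>) \<in> R \<and> u = x @ [Inl A] @ y \<and> v = x @ \<alpha> @ y)"

definition cfg_lang :: "('a \<times> ('a + 'b) list) set \<Rightarrow> 'a \<Rightarrow> 'b list set" where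
  "cfg_lang R S = {w. (cfg_step R)\<^sup>*\<^sup>* [Inl S] (map Inr w)}"

definition spines :: "('n,'t) scftg \<Rightarrow> ('n,'t) ssym list set" where
  "spines G = cfg_lang (spine_prods G) Top"

type_synonym ('n,'t) stree = "('t \<times> 'n, 't \<times> 'n \<times> 'n) btree"

fun gen_root :: "('t \<Rightarrow> nat) \<Rightarrow> ('n,'t) stree \<Rightarrow> 'n" where
  "gen_root d (Lf (\<alpha>, n)) = n"
| "gen_root d (Br (\<sigma>, n1, n2) l r) = (if d \<sigma> = 1 then n1 else n2)"

definition restr :: "('t \<Rightarrow> nat) \<Rightarrow> ('n,'t) stree set \<Rightarrow> 'n \<Rightarrow> ('n,'t) stree set" where
  "restr d T n = {t \<in> T. gen_root d t = n}"

fun att :: "('t \<Rightarrow> nat) \<Rightarrow> ('n,'t) stree set \<Rightarrow> ('n,'t) stree set \<Rightarrow> ('n,'t) ssym list \<Rightarrow> ('n,'t) stree set" where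
  "att d T A [] = A"
| "att d T A (SBin \<sigma> n1 n2 # w) =
     att d T {Br (\<sigma>, n1, n2) t1 t2 | t1 t2.
                if d \<sigma> = 1 then t1 \<in> A \<and> t2 \<in> restr d T n2
                else t2 \<in> A \<and> t1 \<in> restr d T n1} w"
| "att d T A (SLeaf \<alpha> n # w) = {}"

text \<open>\<open>attach_T(w)\<close> for \<open>w \<in> (\<Sigma>0\<times>N)(\<Sigma>2\<times>N\<^sup>2)*\<close> (empty for words not of this shape).\<close>
fun attach :: "('t \<Rightarrow> nat) \<Rightarrow> ('n,'t) stree set \<Rightarrow> ('n,'t) ssym list \<Rightarrow> ('n,'t) stree set" where
  "attach d T (SLeaf \<alpha> n # w) = att d T {Lf (\<alpha>, n)} w"
| "attach d T _ = {}"

definition forest :: "('t \<Rightarrow> nat) \<Rightarrow> ('n,'t) ssym list set \<Rightarrow> ('n,'t) stree set" where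
  "forest d L = \<Inter> {F. \<forall>w \<in> L. attach d F w \<subseteq> F}"

definition relabel :: "('n,'t) stree \<Rightarrow> ('t,'t) btree" where
  "relabel t = map_btree fst fst t"

end

theory Submission
  imports Defs
begin


inductive der :: "('n,'t) scftg \<Rightarrow> ('n,'t) rtree \<Rightarrow> ('n,'t) rtree \<Rightarrow> bool" for G where
  DH: "der G Hole Hole"
| DT: "list_all2 (der G) ts vs \<Longrightarrow> der G (Term f ts) (Term f vs)"
| D0: "(n, r) \<in> prods G \<Longrightarrow> n \<in> N0 G \<Longrightarrow> der G r v \<Longrightarrow> der G (NT n []) v"
| D1: "(n, r) \<in> prods G \<Longrightarrow> n \<in> N1 G \<Longrightarrow> der G r C \<Longrightarrow> der G u v \<Longrightarrow> der G (NT n [u]) (subst_hole C v)"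

inductive Wn :: "('a \<times> ('a + 'b) list) set \<Rightarrow> 'a \<Rightarrow> 'b list \<Rightarrow> bool" for R where
  "(A, \<beta>) \<in> R \<Longrightarrow> list_all2 (\<lambda>a u. (\<forall>B. a = Inl B \<longrightarrow> Wn R B u) \<and> (\<forall>x. a = Inr x \<longrightarrow> u = [x])) \<beta> us
   \<Longrightarrow> Wn R A (concat us)"

section \<open>Substitution\<close>

lemma subst_assoc: "subst_hole (subst_hole a b) c = subst_hole a (subst_hole b c)"
  by (induction a) auto

lemma subst_Hole_right: "subst_hole a Hole = a"
  by (induction a) (auto simp: map_idI)

lemma holes_subst: "holes (subst_hole a b) = holes a * holes b"
proof (induction a)
  case (Term f ts)
  have "sum_list (map (\<lambda>t. holes (subst_hole t b)) ts) = sum_list (map (\<lambda>t. holes t * holes b) ts)"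
    using Term by (metis (no_types, lifting) map_eq_conv)
  then show ?case by (simp add: sum_list_mult_const o_def)
next
  case (NT m ts)
  have "sum_list (map (\<lambda>t. holes (subst_hole t b)) ts) = sum_list (map (\<lambda>t. holes t * holes b) ts)"
    using NT by (metis (no_types, lifting) map_eq_conv)
  then show ?case by (simp add: sum_list_mult_const o_def)
qed simp

lemma subst_holes0: "holes a = 0 \<Longrightarrow> subst_hole a b = a"
proof (induction a)
  case (Term f ts)
  then have "\<forall>t\<in>set ts. holes t = 0" by simp
  then show ?case using Term by (simp add: map_idI)
next
  case (NT m ts)
  then have "\<forall>t\<in>set ts. holes t = 0" by simp
  then show ?case using NT by (simp add: map_idI)
qed simp

lemma split_one_hole:
  "sum_list (map holes ts) = Suc 0 \<Longrightarrow>
   \<exists>xs t ys. ts = xs @ t # ys \<and> holes t = 1 \<and> (\<forall>x\<in>set xs. holes x = 0) \<and> (\<forall>x\<in>set ys. holes x = 0)"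
proof (induction ts)
  case (Cons a ts)
  show ?case
  proof (cases "holes a = 0")
    case True
    then obtain xs t ys where "ts = xs @ t # ys" "holes t = 1" "\<forall>x\<in>set xs. holes x = 0" "\<forall>x\<in>set ys. holes x = 0"
      using Cons by auto
    then show ?thesis using True by (intro exI[of _ "a # xs"]) auto
  next
    case False
    have h: "holes a + sum_list (map holes ts) = 1" using Cons.prems by simp
    then have "holes a = 1" "sum_list (map holes ts) = 0" using False by arith+
    then have "\<forall>x\<in>set ts. holes x = 0" by (simp add: sum_list_eq_0_iff)
    then show ?thesis using \<open>holes a = 1\<close> by (intro exI[of _ "[]"]) auto
  qed
qed simp

inductive_cases derHE: "der G Hole v"
inductive_cases derTE: "der G (Term f ts) v"
inductive_cases derNE: "der G (NT m ts) v"

lemma der_Hole: "der G Hole v \<Longrightarrow> v = Hole"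
  by (erule derHE) auto

lemma der_leaf: "der G (Term a []) v \<Longrightarrow> v = Term a []"
  by (erule derTE) auto

lemma der_embed: "der G (embed t) (embed t)"
  by (induction t) (auto intro: der.intros)

lemma der_holes:
  assumes wf: "wf_scftg G" shows "der G t v \<Longrightarrow> holes v = holes t"
proof (induction rule: der.induct)
  case (DT ts vs f)
  then have "map holes vs = map holes ts"
    by (induction rule: list_all2_induct) auto
  then show ?case by simp
next
  case (D0 n r v)
  then show ?case using wf unfolding wf_scftg_def by fastforce
next
  case (D1 n r C u v)
  then have "holes r = 1" using wf unfolding wf_scftg_def by fastforce
  then show ?case using D1 by (simp add: holes_subst)
qed simp

lemma der_decomp:
  assumes wf: "wf_scftg G"
  shows "holes r = 1 \<Longrightarrow> der G (subst_hole r u) v \<Longrightarrow> \<exists>C v'. der G r C \<and> der G u v' \<and> v = subst_hole C v'"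
proof (induction r arbitrary: v)
  case Hole
  then show ?case by (auto intro: der.intros)
next
  case (Term f ts)
  obtain xs t ys where sp: "ts = xs @ t # ys" "holes t = 1" "\<forall>x\<in>set xs. holes x = 0" "\<forall>x\<in>set ys. holes x = 0"
    using split_one_hole[of ts] Term.prems by auto
  have e: "map (\<lambda>t. subst_hole t u) ts = xs @ subst_hole t u # ys"
    using sp by (simp add: subst_holes0 map_idI)
  from Term.prems(2) obtain vs where v: "v = Term f vs" and la: "list_all2 (der G) (xs @ subst_hole t u # ys) vs"
    using e by (cases rule: der.cases) auto
  then obtain vs1 vt vs2 where vs: "vs = vs1 @ vt # vs2" "list_all2 (der G) xs vs1" "der G (subst_hole t u) vt"
    "list_all2 (der G) ys vs2"
    by (auto simp: list_all2_append1 list_all2_Cons1)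
  from Term.IH[of t vt] sp vs obtain Ct v' where ct: "der G t Ct" "der G u v'" "vt = subst_hole Ct v'"
    by auto
  have h1: "\<forall>x\<in>set vs1. holes x = 0"
    using vs(2) sp(3) der_holes[OF wf]
    by (metis (no_types, lifting) in_set_conv_nth list_all2_conv_all_nth)
  have h2: "\<forall>x\<in>set vs2. holes x = 0"
    using vs(4) sp(4) der_holes[OF wf]
    by (metis (no_types, lifting) in_set_conv_nth list_all2_conv_all_nth)
  have "der G (Term f ts) (Term f (vs1 @ Ct # vs2))"
    using sp vs ct by (auto intro!: der.DT list_all2_appendI)
  moreover have "v = subst_hole (Term f (vs1 @ Ct # vs2)) v'"
    using v vs ct h1 h2 by (simp add: subst_holes0 map_idI)
  ultimately show ?case using ct by blast
next
  case (NT m ts)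
  from NT.prems(2) show ?case
  proof (cases rule: der.cases)
    case (D0 r)
    then show ?thesis using NT.prems(1) by auto
  next
    case (D1 n' r C0 u0 v0)
    then obtain t where t: "ts = [t]" "u0 = subst_hole t u" by auto
    then have "holes t = 1" using NT.prems(1) by simp
    from NT.IH[of t v0] this t D1 obtain Ct v' where ct: "der G t Ct" "der G u v'" "v0 = subst_hole Ct v'"
      by auto
    have "der G (NT m ts) (subst_hole C0 Ct)" using D1 t ct by (auto intro: der.D1)
    moreover have "v = subst_hole (subst_hole C0 Ct) v'" using D1 ct by (simp add: subst_assoc)
    ultimately show ?thesis using ct(2) by blast
  qed auto
qed

lemma der_back:
  assumes wf: "wf_scftg G"
  shows "dstep G (prods G) t t' \<Longrightarrow> der G t' v \<Longrightarrow> der G t v"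
proof (induction arbitrary: v rule: dstep.induct)
  case (apply0 n r)
  then show ?case by (auto intro: der.D0)
next
  case (apply1 n r u)
  then have "holes r = 1" using wf unfolding wf_scftg_def by fastforce
  from der_decomp[OF wf this apply1(3)] obtain C v' where "der G r C" "der G u v'" "v = subst_hole C v'"
    by auto
  then show ?case using apply1 by (auto intro: der.D1)
next
  case (congT t t' f xs ys)
  from congT.prems obtain vs where v: "v = Term f vs" and la: "list_all2 (der G) (xs @ t' # ys) vs"
    by (cases rule: der.cases) auto
  then obtain vs1 vt vs2 where vs: "vs = vs1 @ vt # vs2" "list_all2 (der G) xs vs1" "der G t' vt"
    "list_all2 (der G) ys vs2"
    by (auto simp: list_all2_append1 list_all2_Cons1)
  then show ?case using congT.IH v by (auto intro!: der.DT list_all2_appendI)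
next
  case (congN t t' m xs ys)
  have l: "\<exists>u. xs @ t' # ys = [u]" using congN.prems by (auto elim: derNE)
  then have e: "xs = []" "ys = []" by (cases xs; auto)+
  then have "der G (NT m [t']) v" using congN.prems by simp
  then obtain r C v0 where h: "(m, r) \<in> prods G" "m \<in> N1 G" "der G r C" "der G t' v0" "v = subst_hole C v0"
    by (auto elim: derNE)
  then show ?case using e congN.IH by (auto intro: der.D1)
qed

lemma der_star:
  assumes wf: "wf_scftg G"
  shows "(dstep G (prods G))\<^sup>*\<^sup>* t t' \<Longrightarrow> der G t' v \<Longrightarrow> der G t v"
  by (induction rule: converse_rtranclp_induct) (auto intro: der_back[OF wf])

section \<open>CFG\<close>

lemma cfg_step_lift: "cfg_step R a b \<Longrightarrow> cfg_step R (p @ a @ q) (p @ b @ q)"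
  unfolding cfg_step_def
  by (metis append.assoc)

lemma cfg_star_lift: "(cfg_step R)\<^sup>*\<^sup>* a b \<Longrightarrow> (cfg_step R)\<^sup>*\<^sup>* (p @ a @ q) (p @ b @ q)"
  by (induction rule: rtranclp_induct) (auto intro: rtranclp.rtrancl_into_rtrancl cfg_step_lift)

lemma Wn_cfg: "Wn R A w \<Longrightarrow> (cfg_step R)\<^sup>*\<^sup>* [Inl A] (map Inr w)"
proof (induction rule: Wn.induct)
  case (1 A \<beta> us)
  have s1: "cfg_step R [Inl A] \<beta>" unfolding cfg_step_def using 1(1) by force
  have "(cfg_step R)\<^sup>*\<^sup>* \<beta> (map Inr (concat us))"
    using 1(2)
  proof (induction rule: list_all2_induct)
    case (Cons a \<beta>' u us')
    have "(cfg_step R)\<^sup>*\<^sup>* [a] (map Inr u)"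
      using Cons(1) by (cases a) auto
    then have a: "(cfg_step R)\<^sup>*\<^sup>* ([] @ [a] @ \<beta>') ([] @ map Inr u @ \<beta>')" by (rule cfg_star_lift)
    have b: "(cfg_step R)\<^sup>*\<^sup>* (map Inr u @ \<beta>' @ []) (map Inr u @ map Inr (concat us') @ [])"
      using Cons(3) by (rule cfg_star_lift)
    show ?case using a b by simp
  qed simp
  then show ?case using s1 by (auto intro: converse_rtranclp_into_rtranclp)
qed


definition sym_ok :: "('a \<times> ('a + 'b) list) set \<Rightarrow> ('a + 'b) \<Rightarrow> 'b list \<Rightarrow> bool" where
  "sym_ok R a u \<longleftrightarrow> (\<forall>B. a = Inl B \<longrightarrow> Wn R B u) \<and> (\<forall>x. a = Inr x \<longrightarrow> u = [x])"

definition Wl where "Wl R \<alpha> w \<longleftrightarrow> (\<exists>us. w = concat us \<and> list_all2 (sym_ok R) \<alpha> us)"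

lemma Wl_base: "Wl R (map Inr w) w"
proof -
  have "list_all2 (sym_ok R) (map Inr w) (map (\<lambda>x. [x]) w)"
    by (induction w) (auto simp: sym_ok_def)
  moreover have "w = concat (map (\<lambda>x. [x]) w)" by (induction w) auto
  ultimately show ?thesis unfolding Wl_def by blast
qed

lemma Wl_back: "cfg_step R a b \<Longrightarrow> Wl R b w \<Longrightarrow> Wl R a w"
proof -
  assume "cfg_step R a b" "Wl R b w"
  then obtain x y A \<gamma> us where st: "(A, \<gamma>) \<in> R" "a = x @ [Inl A] @ y" "b = x @ \<gamma> @ y"
    and w: "w = concat us" "list_all2 (sym_ok R) (x @ \<gamma> @ y) us"
    unfolding cfg_step_def Wl_def by blast
  then obtain us1 us2 us3 where u: "us = us1 @ us2 @ us3" "list_all2 (sym_ok R) x us1"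
    "list_all2 (sym_ok R) \<gamma> us2" "list_all2 (sym_ok R) y us3"
    by (auto simp: list_all2_append1)
  have "Wn R A (concat us2)"
    using st(1) u(3) unfolding sym_ok_def[abs_def] by (rule Wn.intros)
  then have "list_all2 (sym_ok R) (x @ [Inl A] @ y) (us1 @ [concat us2] @ us3)"
    using u by (intro list_all2_appendI) (auto simp: sym_ok_def)
  moreover have "w = concat (us1 @ [concat us2] @ us3)" using u w by simp
  ultimately show ?thesis using st unfolding Wl_def by blast
qed

lemma cfg_Wn: "(cfg_step R)\<^sup>*\<^sup>* [Inl A] (map Inr w) \<Longrightarrow> Wn R A w"
proof -
  assume "(cfg_step R)\<^sup>*\<^sup>* [Inl A] (map Inr w)"
  then have "Wl R [Inl A] w"
    by (induction rule: converse_rtranclp_induct) (auto intro: Wl_base Wl_back)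
  then show ?thesis unfolding Wl_def sym_ok_def by (auto simp: list_all2_Cons1)
qed

lemma spines_Wn: "w \<in> spines G \<longleftrightarrow> Wn (spine_prods G) Top w"
  unfolding spines_def cfg_lang_def mem_Collect_eq by (rule iffI) (erule cfg_Wn, erule Wn_cfg)



inductive N0d :: "('n,'t) scftg \<Rightarrow> 'n \<Rightarrow> ('n,'t) rtree \<Rightarrow> bool"
  and N1d :: "('n,'t) scftg \<Rightarrow> 'n \<Rightarrow> ('n,'t) rtree \<Rightarrow> bool" for G where
  R1: "(n, Term \<alpha> []) \<in> prods G \<Longrightarrow> N0d G n (Term \<alpha> [])"
| R2: "(n, NT b [Term \<alpha> []]) \<in> prods G \<Longrightarrow> N1d G b C \<Longrightarrow> N0d G n (subst_hole C (Term \<alpha> []))"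
| R3: "(b, NT b1 [NT b2 [Hole]]) \<in> prods G \<Longrightarrow> N1d G b1 C1 \<Longrightarrow> N1d G b2 C2 \<Longrightarrow> N1d G b (subst_hole C1 C2)"
| R4: "(b, Term \<sigma> [Hole, NT a []]) \<in> prods G \<Longrightarrow> N0d G a va \<Longrightarrow> N1d G b (Term \<sigma> [Hole, va])"
| R5: "(b, Term \<sigma> [NT a [], Hole]) \<in> prods G \<Longrightarrow> N0d G a va \<Longrightarrow> N1d G b (Term \<sigma> [va, Hole])"

lemma norm_shape:
  assumes "normalized G" "(n, r) \<in> prods G"
  shows "(n \<in> N0 G \<and> (\<exists>\<alpha>. r = Term \<alpha> [])) \<or> (n \<in> N0 G \<and> (\<exists>b \<alpha>. b \<in> N1 G \<and> r = NT b [Term \<alpha> []])) \<or>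
    (n \<in> N1 G \<and> (\<exists>b1 b2. r = NT b1 [NT b2 [Hole]])) \<or>
    (n \<in> N1 G \<and> (\<exists>\<sigma> a. a \<in> N0 G \<and> r = Term \<sigma> [Hole, NT a []])) \<or>
    (n \<in> N1 G \<and> (\<exists>\<sigma> a. a \<in> N0 G \<and> r = Term \<sigma> [NT a [], Hole]))"
proof -
  have h: "\<forall>(n, r) \<in> prods G.
        (n \<in> N0 G \<and> (\<exists>\<alpha> \<in> Sig0 G. r = Term \<alpha> [])) \<or>
        (n \<in> N0 G \<and> (\<exists>b \<in> N1 G. \<exists>\<alpha> \<in> Sig0 G. r = NT b [Term \<alpha> []])) \<or>
        (n \<in> N1 G \<and> (\<exists>b1 \<in> N1 G. \<exists>b2 \<in> N1 G. r = NT b1 [NT b2 [Hole]])) \<or>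
        (n \<in> N1 G \<and> (\<exists>\<sigma> \<in> Sig2 G. \<exists>a \<in> N0 G - {start G}. r = Term \<sigma> [Hole, NT a []])) \<or>
        (n \<in> N1 G \<and> (\<exists>\<sigma> \<in> Sig2 G. \<exists>a \<in> N0 G - {start G}. r = Term \<sigma> [NT a [], Hole]))"
    using assms(1) unfolding normalized_def by (rule conjunct1)
  have "(n \<in> N0 G \<and> (\<exists>\<alpha> \<in> Sig0 G. r = Term \<alpha> [])) \<or>
        (n \<in> N0 G \<and> (\<exists>b \<in> N1 G. \<exists>\<alpha> \<in> Sig0 G. r = NT b [Term \<alpha> []])) \<or>
        (n \<in> N1 G \<and> (\<exists>b1 \<in> N1 G. \<exists>b2 \<in> N1 G. r = NT b1 [NT b2 [Hole]])) \<or>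
        (n \<in> N1 G \<and> (\<exists>\<sigma> \<in> Sig2 G. \<exists>a \<in> N0 G - {start G}. r = Term \<sigma> [Hole, NT a []])) \<or>
        (n \<in> N1 G \<and> (\<exists>\<sigma> \<in> Sig2 G. \<exists>a \<in> N0 G - {start G}. r = Term \<sigma> [NT a [], Hole]))"
    using h assms(2) by fast
  then show ?thesis by (elim disjE) blast+
qed

lemma p_leaf: "normalized G \<Longrightarrow> (n, Term \<alpha> []) \<in> prods G \<Longrightarrow> n \<in> N0 G"
  by (drule (1) norm_shape) auto
lemma p_un0: "normalized G \<Longrightarrow> (n, NT b [Term \<alpha> []]) \<in> prods G \<Longrightarrow> n \<in> N0 G"
  by (drule (1) norm_shape) auto
lemma p_cc: "normalized G \<Longrightarrow> (n, NT b1 [NT b2 [Hole]]) \<in> prods G \<Longrightarrow> n \<in> N1 G"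
  by (drule (1) norm_shape) auto
lemma p_L: "normalized G \<Longrightarrow> (n, Term \<sigma> [Hole, NT a []]) \<in> prods G \<Longrightarrow> n \<in> N1 G \<and> a \<in> N0 G"
  by (drule (1) norm_shape) auto
lemma p_R: "normalized G \<Longrightarrow> (n, Term \<sigma> [NT a [], Hole]) \<in> prods G \<Longrightarrow> n \<in> N1 G \<and> a \<in> N0 G"
  by (drule (1) norm_shape) auto

lemma dir_L: "normalized G \<Longrightarrow> spine_direction G d \<Longrightarrow> (n, Term \<sigma> [Hole, NT a []]) \<in> prods G \<Longrightarrow> d \<sigma> = 1"
  using p_L[of G n \<sigma> a] unfolding spine_direction_def by fastforce
lemma dir_R: "normalized G \<Longrightarrow> spine_direction G d \<Longrightarrow> (n, Term \<sigma> [NT a [], Hole]) \<in> prods G \<Longrightarrow> d \<sigma> = 2"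
  using p_R[of G n \<sigma> a] unfolding spine_direction_def by fastforce

lemma N_holes: "(N0d G n v \<longrightarrow> holes v = 0) \<and> (N1d G b C \<longrightarrow> holes C = 1)"
proof -
  have "(N0d G n v \<longrightarrow> holes v = 0) \<and> (N1d G b C \<longrightarrow> holes C = 1)"
    by (induction rule: N0d_N1d.induct[where ?P1.0 = "\<lambda>n v. holes v = 0" and ?P2.0 = "\<lambda>b C. holes C = 1"])
      (auto simp: holes_subst)
  then show ?thesis .
qed

lemma congN_star: "(dstep G Ps)\<^sup>*\<^sup>* x y \<Longrightarrow> (dstep G Ps)\<^sup>*\<^sup>* (NT m [x]) (NT m [y])"
proof (induction rule: rtranclp_induct)
  case (step y z)
  have "dstep G Ps (NT m ([] @ y # [])) (NT m ([] @ z # []))" using step(2) by (rule dstep.congN)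
  then show ?case using step(3) by simp
qed simp

lemma congT_star: "(dstep G Ps)\<^sup>*\<^sup>* x y \<Longrightarrow> (dstep G Ps)\<^sup>*\<^sup>* (Term f (xs @ x # ys)) (Term f (xs @ y # ys))"
proof (induction rule: rtranclp_induct)
  case (step y z)
  have "dstep G Ps (Term f (xs @ y # ys)) (Term f (xs @ z # ys))" using step(2) by (rule dstep.congT)
  then show ?case using step(3) by simp
qed simp

lemma N_dstep:
  assumes nm: "normalized G"
  shows "(N0d G n v \<longrightarrow> (dstep G (prods G))\<^sup>*\<^sup>* (NT n []) v) \<and>
         (N1d G b C \<longrightarrow> (\<forall>u. (dstep G (prods G))\<^sup>*\<^sup>* (NT b [u]) (subst_hole C u)))"
proof (induction rule: N0d_N1d.induct[where ?P1.0 = "\<lambda>n v. (dstep G (prods G))\<^sup>*\<^sup>* (NT n []) v"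
      and ?P2.0 = "\<lambda>b C. \<forall>u. (dstep G (prods G))\<^sup>*\<^sup>* (NT b [u]) (subst_hole C u)"])
  case (R1 n \<alpha>)
  then show ?case using p_leaf[OF nm R1] by (auto intro: dstep.apply0)
next
  case (R2 n b \<alpha> C)
  have "dstep G (prods G) (NT n []) (NT b [Term \<alpha> []])"
    using p_un0[OF nm R2(1)] R2(1) by (auto intro: dstep.apply0)
  then show ?case using R2(3) by (auto intro: converse_rtranclp_into_rtranclp)
next
  case (R3 b b1 b2 C1 C2)
  show ?case
  proof
    fix u
    have "dstep G (prods G) (NT b [u]) (subst_hole (NT b1 [NT b2 [Hole]]) u)"
      using R3(1) p_cc[OF nm R3(1)] by (rule dstep.apply1)
    then have s1: "dstep G (prods G) (NT b [u]) (NT b1 [NT b2 [u]])" by simp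
    have s2: "(dstep G (prods G))\<^sup>*\<^sup>* (NT b1 [NT b2 [u]]) (NT b1 [subst_hole C2 u])"
      using R3(5) by (auto intro: congN_star)
    have s3: "(dstep G (prods G))\<^sup>*\<^sup>* (NT b1 [subst_hole C2 u]) (subst_hole C1 (subst_hole C2 u))"
      using R3(3) by auto
    show "(dstep G (prods G))\<^sup>*\<^sup>* (NT b [u]) (subst_hole (subst_hole C1 C2) u)"
      using s1 s2 s3 by (simp add: subst_assoc)
  qed
next
  case (R4 b \<sigma> a va)
  show ?case
  proof
    fix u
    have "dstep G (prods G) (NT b [u]) (subst_hole (Term \<sigma> [Hole, NT a []]) u)"
      using R4(1) conjunct1[OF p_L[OF nm R4(1)]] by (rule dstep.apply1)
    then have s1: "dstep G (prods G) (NT b [u]) (Term \<sigma> [u, NT a []])" by simp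
    have s2: "(dstep G (prods G))\<^sup>*\<^sup>* (Term \<sigma> ([u] @ NT a [] # [])) (Term \<sigma> ([u] @ va # []))"
      using R4(3) by (rule congT_star)
    have "holes va = 0" using N_holes[of G a va] R4(2) by blast
    then show "(dstep G (prods G))\<^sup>*\<^sup>* (NT b [u]) (subst_hole (Term \<sigma> [Hole, va]) u)"
      using s1 s2 by (simp add: subst_holes0)
  qed
next
  case (R5 b \<sigma> a va)
  show ?case
  proof
    fix u
    have "dstep G (prods G) (NT b [u]) (subst_hole (Term \<sigma> [NT a [], Hole]) u)"
      using R5(1) conjunct1[OF p_R[OF nm R5(1)]] by (rule dstep.apply1)
    then have s1: "dstep G (prods G) (NT b [u]) (Term \<sigma> [NT a [], u])" by simp
    have s2: "(dstep G (prods G))\<^sup>*\<^sup>* (Term \<sigma> ([] @ NT a [] # [u])) (Term \<sigma> ([] @ va # [u]))"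
      using R5(3) by (rule congT_star)
    have "holes va = 0" using N_holes[of G a va] R5(2) by blast
    then show "(dstep G (prods G))\<^sup>*\<^sup>* (NT b [u]) (subst_hole (Term \<sigma> [va, Hole]) u)"
      using s1 s2 by (simp add: subst_holes0)
  qed
qed

lemma der_N:
  assumes wf: "wf_scftg G" and nm: "normalized G"
  shows "der G t v \<Longrightarrow>
    (\<forall>n. t = NT n [] \<longrightarrow> n \<in> N0 G \<longrightarrow> N0d G n v) \<and>
    (\<forall>b u. t = NT b [u] \<longrightarrow> (\<exists>C v'. N1d G b C \<and> der G u v' \<and> v = subst_hole C v')) \<and>
    (\<forall>n. (n, t) \<in> prods G \<longrightarrow> n \<in> N1 G \<longrightarrow> N1d G n v) \<and>
    (\<forall>n. (n, t) \<in> prods G \<longrightarrow> n \<in> N0 G \<longrightarrow> N0d G n v)"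
proof (induction rule: der.induct)
  case DH
  then show ?case using norm_shape[OF nm] by fastforce
next
  case (DT ts vs f)
  have disj: "N0 G \<inter> N1 G = {}" using wf unfolding wf_scftg_def by blast
  have c3: "N1d G n (Term f vs)" if "(n, Term f ts) \<in> prods G" "n \<in> N1 G" for n
  proof -
    from norm_shape[OF nm that(1)] that(2) disj
    consider (L) a where "a \<in> N0 G" "ts = [Hole, NT a []]" | (R) a where "a \<in> N0 G" "ts = [NT a [], Hole]"
      by blast
    then show ?thesis
    proof cases
      case L
      then obtain v1 v2 where "vs = [v1, v2]" "der G Hole v1" "N0d G a v2"
        using DT by (auto simp: list_all2_Cons1)
      then show ?thesis using L that(1) der_Hole by (auto intro: N0d_N1d.R4)
    next
      case R
      then obtain v1 v2 where "vs = [v1, v2]" "der G Hole v2" "N0d G a v1"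
        using DT by (auto simp: list_all2_Cons1)
      then show ?thesis using R that(1) der_Hole by (auto intro: N0d_N1d.R5)
    qed
  qed
  have c4: "N0d G n (Term f vs)" if "(n, Term f ts) \<in> prods G" "n \<in> N0 G" for n
  proof -
    from norm_shape[OF nm that(1)] that(2) disj have "ts = []" by blast
    then have "vs = []" using DT by simp
    then show ?thesis using that(1) \<open>ts = []\<close> by (auto intro: N0d_N1d.R1)
  qed
  show ?case using c3 c4 by blast
next
  case (D0 n r v)
  then show ?case using norm_shape[OF nm] by fastforce
next
  case (D1 n r C u v)
  have disj: "N0 G \<inter> N1 G = {}" using wf unfolding wf_scftg_def by blast
  have nc: "N1d G n C" using D1 by blast
  have c3: "N1d G m (subst_hole C v)" if "(m, NT n [u]) \<in> prods G" "m \<in> N1 G" for m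
  proof -
    from norm_shape[OF nm that(1)] that(2) disj obtain b2 where u: "u = NT b2 [Hole]" by blast
    then obtain C2 v2 where "N1d G b2 C2" "der G Hole v2" "v = subst_hole C2 v2" using D1 by blast
    then have "N1d G b2 v" using der_Hole subst_Hole_right by metis
    then show ?thesis using that(1) u nc by (auto intro: N0d_N1d.R3)
  qed
  have c4: "N0d G m (subst_hole C v)" if "(m, NT n [u]) \<in> prods G" "m \<in> N0 G" for m
  proof -
    from norm_shape[OF nm that(1)] that(2) disj obtain \<alpha> where u: "u = Term \<alpha> []" by blast
    from D1 u have "der G (Term \<alpha> []) v" by simp
    then have "v = Term \<alpha> []" by (rule der_leaf)
    then show ?thesis using that(1) u nc by (auto intro: N0d_N1d.R2)
  qed
  show ?case using c3 c4 nc D1 by blast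
qed



section \<open>Forest\<close>

lemma att_empty: "att d T {} w = {}"
proof (induction w)
  case (Cons x w)
  then show ?case by (cases x) auto
qed simp

lemma att_append: "att d T A (u @ v) = att d T (att d T A u) v"
proof (induction u arbitrary: A)
  case (Cons x u)
  then show ?case by (cases x) (auto simp: att_empty)
qed simp

lemma restr_mono: "T \<subseteq> T' \<Longrightarrow> restr d T n \<subseteq> restr d T' n"
  unfolding restr_def by auto

lemma att_mono: "A \<subseteq> A' \<Longrightarrow> T \<subseteq> T' \<Longrightarrow> att d T A w \<subseteq> att d T' A' w"
proof (induction w arbitrary: A A')
  case (Cons x w)
  show ?case
  proof (cases x)
    case (SBin \<sigma> n1 n2)
    have "{Br (\<sigma>, n1, n2) t1 t2 | t1 t2. if d \<sigma> = 1 then t1 \<in> A \<and> t2 \<in> restr d T n2 else t2 \<in> A \<and> t1 \<in> restr d T n1}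
       \<subseteq> {Br (\<sigma>, n1, n2) t1 t2 | t1 t2. if d \<sigma> = 1 then t1 \<in> A' \<and> t2 \<in> restr d T' n2 else t2 \<in> A' \<and> t1 \<in> restr d T' n1}"
      using Cons.prems restr_mono[OF Cons.prems(2)] by (auto split: if_splits) blast+
    then show ?thesis using SBin Cons by simp
  qed simp
qed simp

lemma attach_mono: "T \<subseteq> T' \<Longrightarrow> attach d T w \<subseteq> attach d T' w"
proof (cases w)
  case (Cons x w')
  assume "T \<subseteq> T'"
  then show ?thesis using Cons by (cases x) (simp_all add: att_mono)
qed simp

lemma forest_closed: "w \<in> L \<Longrightarrow> attach d (forest d L) w \<subseteq> forest d L"
proof -
  assume w: "w \<in> L"
  have "attach d (forest d L) w \<subseteq> F" if "\<forall>w\<in>L. attach d F w \<subseteq> F" for F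
  proof -
    have "forest d L \<subseteq> F" unfolding forest_def using that by blast
    then show ?thesis using attach_mono that w by blast
  qed
  then show ?thesis unfolding forest_def by blast
qed

lemma forest_least: "\<forall>w\<in>L. attach d P w \<subseteq> P \<Longrightarrow> forest d L \<subseteq> P"
  unfolding forest_def by blast

fun lift :: "('n,'t) stree \<Rightarrow> ('m,'t) rtree" where
  "lift (Lf (a, n)) = Term a []"
| "lift (Br (s, n1, n2) l r) = Term s [lift l, lift r]"

lemma lift_embed: "lift s = embed (relabel s)"
  unfolding relabel_def by (induction s rule: lift.induct) auto

lemma holes_lift: "holes (lift s) = 0"
  by (induction s rule: lift.induct) auto

lemma subst_lift: "subst_hole (lift s) u = lift s"
  by (rule subst_holes0[OF holes_lift])

lemma embed_inj: "embed a = (embed b :: ('n,'t) rtree) \<Longrightarrow> a = b"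
proof (induction a arbitrary: b)
  case (Lf x)
  then show ?case by (cases b) auto
next
  case (Br x1 a1 a2)
  then show ?case by (cases b) auto
qed

definition goodw :: "('t \<Rightarrow> nat) \<Rightarrow> 'n \<Rightarrow> ('n,'t) ssym list \<Rightarrow> bool" where
  "goodw d g w \<longleftrightarrow> w \<noteq> [] \<and> (\<forall>x\<in>set w. \<exists>\<sigma> n1 n2. x = SBin \<sigma> n1 n2 \<and> (if d \<sigma> = 1 then n1 else n2) = g)"

lemma gen_att: "goodw d g w \<Longrightarrow> s \<in> att d T A w \<Longrightarrow> gen_root d s = g"
proof (induction w arbitrary: A)
  case (Cons x w)
  then obtain \<sigma> n1 n2 where x: "x = SBin \<sigma> n1 n2" "(if d \<sigma> = 1 then n1 else n2) = g"
    unfolding goodw_def by auto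
  show ?case
  proof (cases "w = []")
    case True
    then show ?thesis using Cons.prems x by (auto split: if_splits)
  next
    case False
    then have "goodw d g w" using Cons.prems(1) unfolding goodw_def by auto
    then show ?thesis using Cons x by simp
  qed
qed (simp add: goodw_def)

lemma Wn_1: "(A, [Inr x]) \<in> R \<Longrightarrow> Wn R A [x]"
  using Wn.intros[of A "[Inr x]" R "[[x]]"] by simp

lemma Wn_2: "(A, [Inr x, Inl B]) \<in> R \<Longrightarrow> Wn R B w \<Longrightarrow> Wn R A (x # w)"
  using Wn.intros[of A "[Inr x, Inl B]" R "[[x], w]"] by simp

lemma Wn_3: "(A, [Inl B, Inl C]) \<in> R \<Longrightarrow> Wn R B u \<Longrightarrow> Wn R C v \<Longrightarrow> Wn R A (u @ v)"
  using Wn.intros[of A "[Inl B, Inl C]" R "[u, v]"] by simp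

lemma spine_good:
  assumes nm: "normalized G" and sd: "spine_direction G d"
  shows "Wn (spine_prods G) A w \<Longrightarrow> (\<forall>b g. A = NP b g \<longrightarrow> goodw d g w)"
proof (induction rule: Wn.induct)
  case (1 A \<beta> us)
  from 1(1) show ?case
  proof (cases rule: spine_prods.cases)
    case (3 n b b' g)
    then obtain u1 u2 where "us = [u1, u2]" "goodw d g u1" "goodw d g u2"
      using 1(2) by (auto simp: list_all2_Cons1)
    then have "goodw d g (concat us)" unfolding goodw_def
      by (metis Un_iff append_Nil2 append_is_Nil_conv concat.simps set_append)
    then show ?thesis using 3 by simp
  next
    case (4 n \<sigma> n' g)
    then have "us = [[SBin \<sigma> g n']]" using 1(2) by (auto simp: list_all2_Cons1)
    then show ?thesis using 4 dir_L[OF nm sd 4(3)] unfolding goodw_def by auto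
  next
    case (5 n \<sigma> n' g)
    then have "us = [[SBin \<sigma> n' g]]" using 1(2) by (auto simp: list_all2_Cons1)
    then show ?thesis using 5 dir_R[OF nm sd 5(3)] unfolding goodw_def by auto
  qed auto
qed



lemma G2F:
  assumes wf: "wf_scftg G" and nm: "normalized G" and sd: "spine_direction G d"
  shows "(N0d G n v \<longrightarrow> (\<exists>s\<in>forest d (spines G). gen_root d s = n \<and> lift s = v)) \<and>
    (N1d G b C \<longrightarrow> (\<forall>g \<in> NN G. \<exists>w. Wn (spine_prods G) (NP b g) w \<and>
        (\<forall>x. \<exists>s\<in>att d (forest d (spines G)) {x} w. lift s = subst_hole C (lift x))))"
proof (induction rule: N0d_N1d.induct[where ?P1.0 = "\<lambda>n v. \<exists>s\<in>forest d (spines G). gen_root d s = n \<and> lift s = v"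
      and ?P2.0 = "\<lambda>b C. \<forall>g \<in> NN G. \<exists>w. Wn (spine_prods G) (NP b g) w \<and>
        (\<forall>x. \<exists>s\<in>att d (forest d (spines G)) {x} w. lift s = subst_hole C (lift x))"])
  case (R1 n \<alpha>)
  have "[SLeaf \<alpha> n] \<in> spines G"
    unfolding spines_Wn by (rule Wn_1) (rule spine_prods.intros(1)[OF R1])
  then have "attach d (forest d (spines G)) [SLeaf \<alpha> n] \<subseteq> forest d (spines G)" by (rule forest_closed)
  then have "Lf (\<alpha>, n) \<in> forest d (spines G)" by simp
  then show ?case by force
next
  case (R2 n b \<alpha> C)
  have "n \<in> NN G" using p_un0[OF nm R2(1)] unfolding NN_def by blast
  then obtain w where w: "Wn (spine_prods G) (NP b n) w"
    and ex: "\<forall>x. \<exists>s\<in>att d (forest d (spines G)) {x} w. lift s = subst_hole C (lift x)"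
    using R2(3) by blast
  obtain s where s: "s \<in> att d (forest d (spines G)) {Lf (\<alpha>, n)} w" "lift s = subst_hole C (Term \<alpha> [])"
    using ex[rule_format, of "Lf (\<alpha>, n)"] by auto
  have "SLeaf \<alpha> n # w \<in> spines G"
    unfolding spines_Wn using spine_prods.intros(2)[OF R2(1)] w by (rule Wn_2)
  then have "attach d (forest d (spines G)) (SLeaf \<alpha> n # w) \<subseteq> forest d (spines G)" by (rule forest_closed)
  then have "s \<in> forest d (spines G)" using s by auto
  moreover have "gen_root d s = n"
    using gen_att[OF spine_good[OF nm sd w, rule_format, OF refl] s(1)] .
  ultimately show ?case using s by blast
next
  case (R3 b b1 b2 C1 C2)
  show ?case
  proof
    fix g assume g: "g \<in> NN G"
    obtain w1 where w1: "Wn (spine_prods G) (NP b1 g) w1"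
      and e1: "\<forall>x. \<exists>s\<in>att d (forest d (spines G)) {x} w1. lift s = subst_hole C1 (lift x)"
      using R3(3) g by blast
    obtain w2 where w2: "Wn (spine_prods G) (NP b2 g) w2"
      and e2: "\<forall>x. \<exists>s\<in>att d (forest d (spines G)) {x} w2. lift s = subst_hole C2 (lift x)"
      using R3(5) g by blast
    have "Wn (spine_prods G) (NP b g) (w2 @ w1)"
      using spine_prods.intros(3)[OF R3(1) g] w2 w1 by (rule Wn_3)
    moreover have "\<exists>s\<in>att d (forest d (spines G)) {x} (w2 @ w1). lift s = subst_hole (subst_hole C1 C2) (lift x)" for x
    proof -
      obtain s2 where s2: "s2 \<in> att d (forest d (spines G)) {x} w2" "lift s2 = subst_hole C2 (lift x)"
        using e2 by blast
      obtain s where s: "s \<in> att d (forest d (spines G)) {s2} w1" "lift s = subst_hole C1 (lift s2)"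
        using e1 by blast
      have "s \<in> att d (forest d (spines G)) (att d (forest d (spines G)) {x} w2) w1"
        using att_mono[of "{s2}" "att d (forest d (spines G)) {x} w2"] s2(1) s(1) by blast
      then show ?thesis using s s2 by (auto simp: att_append subst_assoc)
    qed
    ultimately show "\<exists>w. Wn (spine_prods G) (NP b g) w \<and>
        (\<forall>x. \<exists>s\<in>att d (forest d (spines G)) {x} w. lift s = subst_hole (subst_hole C1 C2) (lift x))"
      by blast
  qed
next
  case (R4 b \<sigma> a va)
  obtain sa where sa: "sa \<in> forest d (spines G)" "gen_root d sa = a" "lift sa = va" using R4(3) by blast
  have d1: "d \<sigma> = 1" using dir_L[OF nm sd R4(1)] .
  show ?case
  proof
    fix g assume g: "g \<in> NN G"
    have "Wn (spine_prods G) (NP b g) [SBin \<sigma> g a]"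
      using spine_prods.intros(4)[OF R4(1) g] by (rule Wn_1)
    moreover have "\<exists>s\<in>att d (forest d (spines G)) {x} [SBin \<sigma> g a]. lift s = subst_hole (Term \<sigma> [Hole, va]) (lift x)" for x
    proof -
      have "Br (\<sigma>, g, a) x sa \<in> att d (forest d (spines G)) {x} [SBin \<sigma> g a]"
        using d1 sa by (simp add: restr_def)
      moreover have "lift (Br (\<sigma>, g, a) x sa) = subst_hole (Term \<sigma> [Hole, va]) (lift x)"
        unfolding sa(3)[symmetric] by (simp add: subst_lift)
      ultimately show ?thesis by blast
    qed
    ultimately show "\<exists>w. Wn (spine_prods G) (NP b g) w \<and>
        (\<forall>x. \<exists>s\<in>att d (forest d (spines G)) {x} w. lift s = subst_hole (Term \<sigma> [Hole, va]) (lift x))"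
      by blast
  qed
next
  case (R5 b \<sigma> a va)
  obtain sa where sa: "sa \<in> forest d (spines G)" "gen_root d sa = a" "lift sa = va" using R5(3) by blast
  have d2: "d \<sigma> = 2" using dir_R[OF nm sd R5(1)] .
  show ?case
  proof
    fix g assume g: "g \<in> NN G"
    have "Wn (spine_prods G) (NP b g) [SBin \<sigma> a g]"
      using spine_prods.intros(5)[OF R5(1) g] by (rule Wn_1)
    moreover have "\<exists>s\<in>att d (forest d (spines G)) {x} [SBin \<sigma> a g]. lift s = subst_hole (Term \<sigma> [va, Hole]) (lift x)" for x
    proof -
      have "Br (\<sigma>, a, g) sa x \<in> att d (forest d (spines G)) {x} [SBin \<sigma> a g]"
        using d2 sa by (simp add: restr_def)
      moreover have "lift (Br (\<sigma>, a, g) sa x) = subst_hole (Term \<sigma> [va, Hole]) (lift x)"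
        unfolding sa(3)[symmetric] by (simp add: subst_lift)
      ultimately show ?thesis by blast
    qed
    ultimately show "\<exists>w. Wn (spine_prods G) (NP b g) w \<and>
        (\<forall>x. \<exists>s\<in>att d (forest d (spines G)) {x} w. lift s = subst_hole (Term \<sigma> [va, Hole]) (lift x))"
      by blast
  qed
qed

lemma U:
  assumes nm: "normalized G" and sd: "spine_direction G d"
    and P: "\<forall>s\<in>P. N0d G (gen_root d s) (lift s)"
  shows "Wn (spine_prods G) A w \<Longrightarrow> \<forall>b g. A = NP b g \<longrightarrow>
     (\<forall>A' s. s \<in> att d P A' w \<longrightarrow> (\<exists>x\<in>A'. \<exists>C. N1d G b C \<and> lift s = subst_hole C (lift x)))"
proof (induction rule: Wn.induct)
  case (1 A \<beta> us)
  from 1(1) show ?case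
  proof (cases rule: spine_prods.cases)
    case (3 n b b' g)
    then obtain u1 u2 where us: "us = [u1, u2]"
      and i1: "\<forall>A' s. s \<in> att d P A' u1 \<longrightarrow> (\<exists>x\<in>A'. \<exists>C. N1d G b' C \<and> lift s = subst_hole C (lift x))"
      and i2: "\<forall>A' s. s \<in> att d P A' u2 \<longrightarrow> (\<exists>x\<in>A'. \<exists>C. N1d G b C \<and> lift s = subst_hole C (lift x))"
      using 1(2) by (auto simp: list_all2_Cons1)
    have "\<exists>x\<in>A'. \<exists>C. N1d G n C \<and> lift s = subst_hole C (lift x)" if s: "s \<in> att d P A' (u1 @ u2)" for A' s
    proof -
      from s have "s \<in> att d P (att d P A' u1) u2" by (simp add: att_append)
      then obtain y C1 where y: "y \<in> att d P A' u1" "N1d G b C1" "lift s = subst_hole C1 (lift y)"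
        using i2 by blast
      then obtain x C2 where x: "x \<in> A'" "N1d G b' C2" "lift y = subst_hole C2 (lift x)"
        using i1 by blast
      have "N1d G n (subst_hole C1 C2)" using 3(3) y(2) x(2) by (rule N0d_N1d.R3)
      then show ?thesis using x y
        by (intro bexI[of _ x] exI[of _ "subst_hole C1 C2"]) (simp_all add: subst_assoc)
    qed
    then show ?thesis using 3 us by simp
  next
    case (4 n \<sigma> n' g)
    then have us: "us = [[SBin \<sigma> g n']]" using 1(2) by (auto simp: list_all2_Cons1)
    have d1: "d \<sigma> = 1" using dir_L[OF nm sd 4(3)] .
    have "\<exists>x\<in>A'. \<exists>C. N1d G n C \<and> lift s = subst_hole C (lift x)" if s: "s \<in> att d P A' [SBin \<sigma> g n']" for A' s
    proof -
      from s d1 obtain t1 t2 where t: "s = Br (\<sigma>, g, n') t1 t2" "t1 \<in> A'" "t2 \<in> P" "gen_root d t2 = n'"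
        by (auto simp: restr_def)
      have "N0d G n' (lift t2)" using P t by auto
      then have "N1d G n (Term \<sigma> [Hole, lift t2])" using 4(3) by (intro N0d_N1d.R4)
      moreover have "lift s = subst_hole (Term \<sigma> [Hole, lift t2]) (lift t1)"
        using t by (simp add: subst_lift)
      ultimately show ?thesis using t by blast
    qed
    then show ?thesis using 4 us by simp
  next
    case (5 n \<sigma> n' g)
    then have us: "us = [[SBin \<sigma> n' g]]" using 1(2) by (auto simp: list_all2_Cons1)
    have d2: "d \<sigma> = 2" using dir_R[OF nm sd 5(3)] .
    have "\<exists>x\<in>A'. \<exists>C. N1d G n C \<and> lift s = subst_hole C (lift x)" if s: "s \<in> att d P A' [SBin \<sigma> n' g]" for A' s
    proof -
      from s d2 obtain t1 t2 where t: "s = Br (\<sigma>, n', g) t1 t2" "t2 \<in> A'" "t1 \<in> P" "gen_root d t1 = n'"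
        by (auto simp: restr_def)
      have "N0d G n' (lift t1)" using P t by auto
      then have "N1d G n (Term \<sigma> [lift t1, Hole])" using 5(3) by (intro N0d_N1d.R5)
      moreover have "lift s = subst_hole (Term \<sigma> [lift t1, Hole]) (lift t2)"
        using t by (simp add: subst_lift)
      ultimately show ?thesis using t by blast
    qed
    then show ?thesis using 5 us by simp
  qed auto
qed

lemma F2G:
  assumes wf: "wf_scftg G" and nm: "normalized G" and sd: "spine_direction G d"
  shows "s \<in> forest d (spines G) \<Longrightarrow> N0d G (gen_root d s) (lift s)"
proof -
  define F where "F = forest d (spines G)"
  define P where "P = {s \<in> F. N0d G (gen_root d s) (lift s)}"
  have PF: "P \<subseteq> F" unfolding P_def by blast
  have Pp: "\<forall>s\<in>P. N0d G (gen_root d s) (lift s)" unfolding P_def by blast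
  have "attach d P w \<subseteq> P" if w: "w \<in> spines G" for w
  proof -
    have cl: "attach d P w \<subseteq> F"
      using attach_mono[OF PF, of d w] forest_closed[OF w, of d] unfolding F_def by blast
    from w have "Wn (spine_prods G) Top w" by (simp add: spines_Wn)
    then show ?thesis
    proof (cases rule: Wn.cases)
      case (1 \<beta> us)
      from 1(2) show ?thesis
      proof (cases rule: spine_prods.cases)
        case (1 n \<alpha>)
        then have "w = [SLeaf \<alpha> n]" using \<open>w = concat us\<close> \<open>list_all2 _ \<beta> us\<close> by (auto simp: list_all2_Cons1)
        moreover have "N0d G n (Term \<alpha> [])" using 1(2) by (rule N0d_N1d.R1)
        ultimately show ?thesis using cl unfolding P_def by auto
      next
        case (2 n b \<alpha>)
        then obtain w' where w': "w = SLeaf \<alpha> n # w'" "Wn (spine_prods G) (NP b n) w'"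
          using \<open>w = concat us\<close> \<open>list_all2 _ \<beta> us\<close> by (auto simp: list_all2_Cons1)
        show ?thesis
        proof
          fix s assume s: "s \<in> attach d P w"
          then have sF: "s \<in> F" using cl by blast
          from s w' have s': "s \<in> att d P {Lf (\<alpha>, n)} w'" by simp
          from U[OF nm sd Pp w'(2), rule_format, OF refl s'] obtain C where
            C: "N1d G b C" "lift s = subst_hole C (Term \<alpha> [])" by auto
          have g: "gen_root d s = n"
            using gen_att[OF spine_good[OF nm sd w'(2), rule_format, OF refl] s'] .
          have "N0d G n (subst_hole C (Term \<alpha> []))" using 2(2) C(1) by (rule N0d_N1d.R2)
          then show "s \<in> P" using sF g C unfolding P_def by simp
        qed
      qed
    qed
  qed
  then have "F \<subseteq> P" unfolding F_def by (intro forest_least) blast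
  moreover assume "s \<in> forest d (spines G)"
  ultimately show ?thesis unfolding F_def P_def by blast
qed

theorem theorem6p6:
  fixes G :: "('n,'t) scftg" and d :: "'t \<Rightarrow> nat"
  assumes "wf_scftg G" and "normalized G" and "spine_direction G d"
  shows "relabel ` restr d (forest d (spines G)) (start G) = tree_lang G"
proof
  show "relabel ` restr d (forest d (spines G)) (start G) \<subseteq> tree_lang G"
  proof
    fix t assume "t \<in> relabel ` restr d (forest d (spines G)) (start G)"
    then obtain s where s: "s \<in> forest d (spines G)" "gen_root d s = start G" "t = relabel s"
      unfolding restr_def by auto
    have "N0d G (start G) (lift s)" using F2G[OF assms s(1)] s(2) by simp
    then have "(dstep G (prods G))\<^sup>*\<^sup>* (NT (start G) []) (lift s)"
      using N_dstep[OF assms(2)] by blast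
    then show "t \<in> tree_lang G" unfolding tree_lang_def using s(3) by (simp add: lift_embed)
  qed
next
  show "tree_lang G \<subseteq> relabel ` restr d (forest d (spines G)) (start G)"
  proof
    fix t assume "t \<in> tree_lang G"
    then have st: "(dstep G (prods G))\<^sup>*\<^sup>* (NT (start G) []) (embed t)" unfolding tree_lang_def by simp
    have "der G (NT (start G) []) (embed t)" using der_star[OF assms(1) st der_embed] .
    moreover have "start G \<in> N0 G" using assms(1) unfolding wf_scftg_def by blast
    ultimately have "N0d G (start G) (embed t)" using der_N[OF assms(1,2)] by blast
    then have "\<exists>s\<in>forest d (spines G). gen_root d s = start G \<and> lift s = (embed t :: ('n,'t) rtree)"
      using G2F[OF assms, where n = "start G" and v = "embed t"] by blast
    then obtain s where s: "s \<in> forest d (spines G)" "gen_root d s = start G" "lift s = (embed t :: ('n,'t) rtree)"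
      by blast
    have "relabel s = t" using s(3) lift_embed[of s] embed_inj by metis
    then show "t \<in> relabel ` restr d (forest d (spines G)) (start G)"
      using s unfolding restr_def by blast
  qed
qed

end
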